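(* Let $v$ be a typical weight, let $X\subset\mathcal{H}(\mathbb{D})$ be a Banach space with bounded point evaluations $\delta_z$, and let $\beta>0$. Let $u\in\mathcal{H}(\mathbb{D})$, $\phi:\mathbb{D}\to\mathbb{D}$ holomorphic, $g\in\mathcal{H}(\mathbb{D})$, $W_{u,\phi}f=u\cdot(f\circ\phi)$ and $T_gf(z)=\int_0^zf(w)g'(w)\,dw$. Then: (i) $W_{u,\phi}:X\to H_{v,0}$ is bounded if and only if $v(z)u(z)\delta_{\phi(z)}\to0$ weak$^*$ in $X^*$ as $|z|\to1$. (ii) $T_g:X\to\mathcal{B}_{v,0}$ is bounded if and only if $v(z)g'(z)\delta_z\to0$ weak$^*$ in $X^*$ as $|z|\to1$. (iii) $T_g:X\to H_{\beta,0}$ is bounded if and only if $(1-|z|^2)^{\beta+1}g'(z)\delta_z\to0$ weak$^*$ in $X^*$ as $|z|\to1$.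
   Context: $\mathbb{D}$ is the unit disk, $\mathcal{H}(\mathbb{D})$ its holomorphic functions. $X$ has bounded point evaluations if for each $z\in\mathbb{D}$ there is $\delta_z\in X^*$ with $\delta_z(f)=f(z)$ for all $f\in X$. A typical weight is a continuous radial $v:\mathbb{D}\to(0,1]$, non-increasing in $|z|$, with $v(z)\to0$ as $|z|\to1$. $H_{v,0}=\{f\in\mathcal{H}(\mathbb{D}):\lim_{|z|\to1}v(z)|f(z)|=0\}$ with norm $\sup_z v(z)|f(z)|$; $\mathcal{B}_{v,0}=\{f:\lim_{|z|\to1}v(z)|f'(z)|=0\}$ with norm $|f(0)|+\sup_zv(z)|f'(z)|$; $H_{\beta,0}$ is $H_{v,0}$ for $v(z)=(1-|z|^2)^\beta$. *)

theory Defs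
  imports "HOL-Complex_Analysis.Complex_Analysis"
begin

abbreviation disc :: "complex set" where "disc \<equiv> ball 0 1"

definition to_bdry :: "complex filter" where
  "to_bdry = filtercomap norm (at_left (1::real))"

definition typical_weight :: "(complex \<Rightarrow> real) \<Rightarrow> bool" where
  "typical_weight v \<longleftrightarrow>
     continuous_on disc v \<and>
     (\<forall>z\<in>disc. 0 < v z \<and> v z \<le> 1) \<and>
     (\<forall>z\<in>disc. \<forall>w\<in>disc. norm z = norm w \<longrightarrow> v z = v w) \<and>
     (\<forall>z\<in>disc. \<forall>w\<in>disc. norm z \<le> norm w \<longrightarrow> v w \<le> v z) \<and>
     (v \<longlongrightarrow> 0) to_bdry"

text \<open>(X, N) is a Banach space of holomorphic functions on the disk (functions are
  identified when they agree on the disk) with bounded point evaluations.\<close>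
definition banach_bpe :: "(complex \<Rightarrow> complex) set \<Rightarrow> ((complex \<Rightarrow> complex) \<Rightarrow> real) \<Rightarrow> bool" where
  "banach_bpe X N \<longleftrightarrow>
     (\<forall>f\<in>X. f holomorphic_on disc) \<and>
     (\<lambda>z. 0) \<in> X \<and>
     (\<forall>f\<in>X. \<forall>g\<in>X. (\<lambda>z. f z + g z) \<in> X) \<and>
     (\<forall>f\<in>X. \<forall>c. (\<lambda>z. c * f z) \<in> X) \<and>
     (\<forall>f\<in>X. 0 \<le> N f) \<and>
     (\<forall>f\<in>X. N f = 0 \<longleftrightarrow> (\<forall>z\<in>disc. f z = 0)) \<and>
     (\<forall>f\<in>X. \<forall>g\<in>X. N (\<lambda>z. f z + g z) \<le> N f + N g) \<and>
     (\<forall>f\<in>X. \<forall>c. N (\<lambda>z. c * f z) = norm c * N f) \<and>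
     (\<forall>f\<in>X. \<forall>g\<in>X. (\<forall>z\<in>disc. f z = g z) \<longrightarrow> N f = N g) \<and>
     (\<forall>F. (\<forall>n. F n \<in> X) \<longrightarrow>
          (\<forall>e>0. \<exists>M. \<forall>m\<ge>M. \<forall>n\<ge>M. N (\<lambda>z. F m z - F n z) < e) \<longrightarrow>
          (\<exists>f\<in>X. (\<lambda>n. N (\<lambda>z. F n z - f z)) \<longlonglongrightarrow> 0)) \<and>
     (\<forall>z\<in>disc. \<exists>C. \<forall>f\<in>X. norm (f z) \<le> C * N f)"

definition Hv0 :: "(complex \<Rightarrow> real) \<Rightarrow> (complex \<Rightarrow> complex) set" where
  "Hv0 v = {f. f holomorphic_on disc \<and> ((\<lambda>z. v z * norm (f z)) \<longlongrightarrow> 0) to_bdry}"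

definition Hv_norm :: "(complex \<Rightarrow> real) \<Rightarrow> (complex \<Rightarrow> complex) \<Rightarrow> real" where
  "Hv_norm v f = (SUP z\<in>disc. v z * norm (f z))"

definition Bv0 :: "(complex \<Rightarrow> real) \<Rightarrow> (complex \<Rightarrow> complex) set" where
  "Bv0 v = {f. f holomorphic_on disc \<and> ((\<lambda>z. v z * norm (deriv f z)) \<longlongrightarrow> 0) to_bdry}"

definition Bv_norm :: "(complex \<Rightarrow> real) \<Rightarrow> (complex \<Rightarrow> complex) \<Rightarrow> real" where
  "Bv_norm v f = norm (f 0) + (SUP z\<in>disc. v z * norm (deriv f z))"

definition std_weight :: "real \<Rightarrow> complex \<Rightarrow> real" where
  "std_weight \<beta> z = (1 - (norm z)\<^sup>2) powr \<beta>"

definition bounded_into ::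
  "(complex \<Rightarrow> complex) set \<Rightarrow> ((complex \<Rightarrow> complex) \<Rightarrow> real) \<Rightarrow>
   ((complex \<Rightarrow> complex) \<Rightarrow> (complex \<Rightarrow> complex)) \<Rightarrow>
   (complex \<Rightarrow> complex) set \<Rightarrow> ((complex \<Rightarrow> complex) \<Rightarrow> real) \<Rightarrow> bool" where
  "bounded_into X N T S nS \<longleftrightarrow> (\<forall>f\<in>X. T f \<in> S) \<and> (\<exists>C. \<forall>f\<in>X. nS (T f) \<le> C * N f)"

definition Wop :: "(complex \<Rightarrow> complex) \<Rightarrow> (complex \<Rightarrow> complex) \<Rightarrow> (complex \<Rightarrow> complex) \<Rightarrow> complex \<Rightarrow> complex" where
  "Wop u \<phi> f = (\<lambda>z. u z * f (\<phi> z))"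

definition Top :: "(complex \<Rightarrow> complex) \<Rightarrow> (complex \<Rightarrow> complex) \<Rightarrow> complex \<Rightarrow> complex" where
  "Top g f = (\<lambda>z. contour_integral (linepath 0 z) (\<lambda>w. f w * deriv g w))"

end

theory Submission
  imports Defs "HOL-Complex_Analysis.Complex_Analysis"
begin
lemma bpe_unfold:
  assumes "banach_bpe X N"
  shows "\<forall>f\<in>X. f holomorphic_on disc"
    and "\<forall>f\<in>X. \<forall>g\<in>X. (\<lambda>z. f z + g z) \<in> X"
    and "\<forall>f\<in>X. \<forall>c. (\<lambda>z. c * f z) \<in> X"
    and "\<forall>f\<in>X. 0 \<le> N f"
    and "\<forall>f\<in>X. N f = 0 \<longleftrightarrow> (\<forall>z\<in>disc. f z = 0)"
    and "\<forall>f\<in>X. \<forall>g\<in>X. N (\<lambda>z. f z + g z) \<le> N f + N g"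
    and "\<forall>f\<in>X. \<forall>c. N (\<lambda>z. c * f z) = norm c * N f"
    and "\<forall>F. (\<forall>n. F n \<in> X) \<longrightarrow>
          (\<forall>e>0. \<exists>M. \<forall>m\<ge>M. \<forall>n\<ge>M. N (\<lambda>z. F m z - F n z) < e) \<longrightarrow>
          (\<exists>f\<in>X. (\<lambda>n. N (\<lambda>z. F n z - f z)) \<longlonglongrightarrow> 0)"
    and "\<forall>z\<in>disc. \<exists>C. \<forall>f\<in>X. norm (f z) \<le> C * N f"
  using assms unfolding banach_bpe_def apply - by (elim conjE, assumption)+

lemma bpe_add: assumes "banach_bpe X N" "f \<in> X" "g \<in> X" shows "(\<lambda>z. f z + g z) \<in> X"
  using bpe_unfold(2)[OF assms(1), rule_format, OF assms(2,3)] .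
lemma bpe_smult: assumes "banach_bpe X N" "f \<in> X" shows "(\<lambda>z. c * f z) \<in> X"
  using bpe_unfold(3)[OF assms(1), rule_format, OF assms(2)] .
lemma bpe_nonneg: assumes "banach_bpe X N" "f \<in> X" shows "0 \<le> N f"
  using bpe_unfold(4)[OF assms(1), rule_format, OF assms(2)] .
lemma bpe_zero: assumes "banach_bpe X N" "f \<in> X" shows "N f = 0 \<longleftrightarrow> (\<forall>z\<in>disc. f z = 0)"
  using bpe_unfold(5)[OF assms(1), rule_format, OF assms(2)] .
lemma bpe_tri: assumes "banach_bpe X N" "f \<in> X" "g \<in> X" shows "N (\<lambda>z. f z + g z) \<le> N f + N g"
  using bpe_unfold(6)[OF assms(1), rule_format, OF assms(2,3)] .
lemma bpe_N_smult: assumes "banach_bpe X N" "f \<in> X" shows "N (\<lambda>z. c * f z) = norm c * N f"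
  using bpe_unfold(7)[OF assms(1), rule_format, OF assms(2)] .
lemma bpe_hol: assumes "banach_bpe X N" "f \<in> X" shows "f holomorphic_on disc"
  using bpe_unfold(1)[OF assms(1), rule_format, OF assms(2)] .

lemma bpe_diff: assumes "banach_bpe X N" "f \<in> X" "g \<in> X" shows "(\<lambda>z. f z - g z) \<in> X"
proof -
  have "(\<lambda>z. f z + (\<lambda>z. (-1) * g z) z) \<in> X"
    by (rule bpe_add[OF assms(1,2) bpe_smult[OF assms(1,3)]])
  moreover have "(\<lambda>z. f z + (\<lambda>z. (-1) * g z) z) = (\<lambda>z. f z - g z)" by (rule ext) simp
  ultimately show ?thesis by (simp only:)
qed

lemma bpe_sym:
  assumes "banach_bpe X N" "f \<in> X" "g \<in> X"
  shows "N (\<lambda>z. f z - g z) = N (\<lambda>z. g z - f z)"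
proof -
  have "N (\<lambda>z. (-1) * (\<lambda>z. g z - f z) z) = norm (-1::complex) * N (\<lambda>z. g z - f z)"
    by (rule bpe_N_smult[OF assms(1) bpe_diff[OF assms(1) assms(3,2)]])
  moreover have "(\<lambda>z. (-1) * (\<lambda>z. g z - f z) z) = (\<lambda>z. f z - g z)" by (rule ext) simp
  ultimately show ?thesis by simp
qed

lemma bpe_tri_diff:
  assumes "banach_bpe X N" "f \<in> X" "g \<in> X" "h \<in> X"
  shows "N (\<lambda>z. f z - h z) \<le> N (\<lambda>z. f z - g z) + N (\<lambda>z. g z - h z)"
proof -
  have "N (\<lambda>z. (\<lambda>z. f z - g z) z + (\<lambda>z. g z - h z) z) \<le> N (\<lambda>z. f z - g z) + N (\<lambda>z. g z - h z)"
    by (rule bpe_tri[OF assms(1) bpe_diff[OF assms(1,2,3)] bpe_diff[OF assms(1,3,4)]])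
  moreover have "(\<lambda>z. (\<lambda>z. f z - g z) z + (\<lambda>z. g z - h z) z) = (\<lambda>z. f z - h z)" by (rule ext) simp
  ultimately show ?thesis by (simp only:)
qed

lemma bpe_pteval:
  assumes "banach_bpe X N"
  obtains Cw where "\<And>w. Cw w \<ge> 0" "\<And>w f. w \<in> disc \<Longrightarrow> f \<in> X \<Longrightarrow> norm (f w) \<le> Cw w * N f"
proof -
  have "\<forall>w. \<exists>C. C \<ge> 0 \<and> (w \<in> disc \<longrightarrow> (\<forall>f\<in>X. norm (f w) \<le> C * N f))"
  proof
    fix w
    show "\<exists>C. C \<ge> 0 \<and> (w \<in> disc \<longrightarrow> (\<forall>f\<in>X. norm (f w) \<le> C * N f))"
    proof (cases "w \<in> disc")
      case True
      then obtain C where C: "\<forall>f\<in>X. norm (f w) \<le> C * N f" using bpe_unfold(9)[OF assms] by blast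
      have "\<forall>f\<in>X. norm (f w) \<le> max C 0 * N f"
      proof
        fix f assume "f \<in> X"
        then have "C * N f \<le> max C 0 * N f" using bpe_nonneg[OF assms] by (simp add: mult_right_mono)
        then show "norm (f w) \<le> max C 0 * N f" using C \<open>f \<in> X\<close> by fastforce
      qed
      then show ?thesis by (intro exI[of _ "max C 0"]) auto
    qed auto
  qed
  then obtain Cw where "\<And>w. Cw w \<ge> 0 \<and> (w \<in> disc \<longrightarrow> (\<forall>f\<in>X. norm (f w) \<le> Cw w * N f))"
    by metis
  then show ?thesis using that by blast
qed

lemma bpe_0: assumes "banach_bpe X N" shows "(\<lambda>z. 0) \<in> X"
  using assms unfolding banach_bpe_def apply - by (elim conjE, assumption)

lemma bpe_complete:
  assumes "banach_bpe X N" "\<And>n. F n \<in> X" "\<And>e. e > 0 \<Longrightarrow> \<exists>M. \<forall>m\<ge>M. \<forall>n\<ge>M. N (\<lambda>z. F m z - F n z) < e"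
  shows "\<exists>f\<in>X. (\<lambda>n. N (\<lambda>z. F n z - f z)) \<longlonglongrightarrow> 0"
  using bpe_unfold(8)[OF assms(1)] assms(2,3) by blast

lemma bpe_N_self: assumes "banach_bpe X N" "f \<in> X" shows "N (\<lambda>z. f z - f z) = 0"
  using bpe_zero[OF assms(1) bpe_diff[OF assms(1,2,2)]] by simp

primrec ubp_seq :: "((complex \<Rightarrow> complex) \<Rightarrow> real \<Rightarrow> real \<Rightarrow> 'i \<times> (complex \<Rightarrow> complex)) \<Rightarrow> ('i \<Rightarrow> real)
   \<Rightarrow> nat \<Rightarrow> (complex \<Rightarrow> complex) \<times> real" where
  "ubp_seq st Cf 0 = ((\<lambda>z. 0), 1)"
| "ubp_seq st Cf (Suc n) = (let p = ubp_seq st Cf n; q = st (fst p) (snd p) (real n + 1)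
      in (snd q, min (snd p / 2) (1 / (2 * (Cf (fst q) + 1)))))"

lemma ubp:
  fixes L :: "'i \<Rightarrow> (complex \<Rightarrow> complex) \<Rightarrow> complex"
  assumes B: "banach_bpe X N"
  and add: "\<And>z f g. z\<in>A \<Longrightarrow> f\<in>X \<Longrightarrow> g\<in>X \<Longrightarrow> L z (\<lambda>w. f w + g w) = L z f + L z g"
  and smul: "\<And>z f c. z\<in>A \<Longrightarrow> f\<in>X \<Longrightarrow> L z (\<lambda>w. c * f w) = c * L z f"
  and bnd: "\<And>z. z\<in>A \<Longrightarrow> \<exists>C\<ge>0. \<forall>f\<in>X. norm (L z f) \<le> C * N f"
  and pw: "\<And>f. f\<in>X \<Longrightarrow> \<exists>B. \<forall>z\<in>A. norm (L z f) \<le> B"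
  shows "\<exists>C. \<forall>z\<in>A. \<forall>f\<in>X. norm (L z f) \<le> C * N f"
proof (rule ccontr)
  assume neg: "\<not> ?thesis"
  define Cf where "Cf z = (SOME C. C \<ge> 0 \<and> (\<forall>f\<in>X. norm (L z f) \<le> C * N f))" for z
  have Cf: "Cf z \<ge> 0 \<and> (\<forall>f\<in>X. norm (L z f) \<le> Cf z * N f)" if "z \<in> A" for z
    unfolding Cf_def by (rule someI_ex) (use bnd[OF that] in blast)
  have diffL: "L z (\<lambda>w. f w - g w) = L z f - L z g" if "z\<in>A" "f\<in>X" "g\<in>X" for z f g
  proof -
    have "L z (\<lambda>w. f w + (\<lambda>w. (-1) * g w) w) = L z f + L z (\<lambda>w. (-1) * g w)"
      by (rule add[OF that(1,2) bpe_smult[OF B that(3)]])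
    also have "L z (\<lambda>w. (-1) * g w) = (-1) * L z g" by (rule smul[OF that(1,3)])
    also have "(\<lambda>w. f w + (\<lambda>w. (-1) * g w) w) = (\<lambda>w. f w - g w)" by (rule ext) simp
    finally show ?thesis by simp
  qed
  have step: "\<exists>p. fst p \<in> A \<and> snd p \<in> X \<and> N (\<lambda>w. snd p w - x w) \<le> r \<and> K < norm (L (fst p) (snd p))"
    if x: "x \<in> X" and r: "r > 0" for x r K
  proof -
    define M where "M = \<bar>K\<bar> / r + 1"
    have "\<not> (\<forall>z\<in>A. \<forall>f\<in>X. norm (L z f) \<le> M * N f)" using neg by blast
    then have "\<exists>z\<in>A. \<exists>f\<in>X. M * N f < norm (L z f)" by (auto simp: not_le)
    then obtain z f where z: "z \<in> A" and f: "f \<in> X" and Mf: "M * N f < norm (L z f)" by blast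
    have Nf: "N f > 0"
    proof (rule ccontr)
      assume "\<not> N f > 0"
      then have "N f = 0" using bpe_nonneg[OF B f] by simp
      then show False using Mf Cf[OF z] f by fastforce
    qed
    define c where "c = complex_of_real (r / N f)"
    define y where "y = (\<lambda>w. c * f w)"
    have y: "y \<in> X" unfolding y_def by (rule bpe_smult[OF B f])
    have nc: "norm c = r / N f" unfolding c_def using r Nf by (simp add: norm_divide)
    have Ny: "N y = r" unfolding y_def using bpe_N_smult[OF B f] nc Nf by simp
    have Ly: "L z y = c * L z f" unfolding y_def by (rule smul[OF z f])
    have "norm (L z y) = r / N f * norm (L z f)" using Ly nc by (simp add: norm_mult)
    also have "\<dots> > r / N f * (M * N f)" using Mf r Nf by (intro mult_strict_left_mono) auto
    also have "r / N f * (M * N f) = r * M" using Nf by simp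
    also have "r * M = \<bar>K\<bar> + r" unfolding M_def using r by (simp add: field_simps)
    finally have bigy: "norm (L z y) > \<bar>K\<bar> + r" .
    define x1 where "x1 = (\<lambda>w. x w + y w)"
    define x2 where "x2 = (\<lambda>w. x w - y w)"
    have x1: "x1 \<in> X" unfolding x1_def by (rule bpe_add[OF B x y])
    have x2: "x2 \<in> X" unfolding x2_def by (rule bpe_diff[OF B x y])
    have L1: "L z x1 = L z x + L z y" unfolding x1_def by (rule add[OF z x y])
    have L2: "L z x2 = L z x - L z y" unfolding x2_def by (rule diffL[OF z x y])
    have "L z x1 - L z x2 = 2 * L z y" using L1 L2 by simp
    then have "2 * norm (L z y) = norm (L z x1 - L z x2)" by (simp add: norm_mult)
    also have "\<dots> \<le> norm (L z x1) + norm (L z x2)" by (rule norm_triangle_ineq4)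
    finally have sum: "norm (L z x1) + norm (L z x2) > 2 * (\<bar>K\<bar> + r)" using bigy by (smt (verit))
    have e1: "(\<lambda>w. x1 w - x w) = y" unfolding x1_def by (rule ext) simp
    have e2: "(\<lambda>w. x2 w - x w) = (\<lambda>w. (-1) * y w)" unfolding x2_def by (rule ext) simp
    have N1: "N (\<lambda>w. x1 w - x w) = r" using e1 Ny by simp
    have N2: "N (\<lambda>w. x2 w - x w) = r" using e2 Ny bpe_N_smult[OF B y, of "-1"] by simp
    show ?thesis
    proof (cases "norm (L z x1) > K")
      case True
      then show ?thesis using z x1 N1 by (intro exI[of _ "(z, x1)"]) auto
    next
      case False
      then have "norm (L z x2) > K" using sum r abs_ge_self[of K] abs_ge_zero[of K] by (smt (verit))
      then show ?thesis using z x2 N2 by (intro exI[of _ "(z, x2)"]) auto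
    qed
  qed
  define st where "st x r K = (SOME p. fst p \<in> A \<and> snd p \<in> X \<and> N (\<lambda>w. snd p w - x w) \<le> r \<and> K < norm (L (fst p) (snd p)))" for x r K
  have st: "fst (st x r K) \<in> A \<and> snd (st x r K) \<in> X \<and> N (\<lambda>w. snd (st x r K) w - x w) \<le> r
      \<and> K < norm (L (fst (st x r K)) (snd (st x r K)))" if "x \<in> X" "r > 0" for x r K
    unfolding st_def by (rule someI_ex) (rule step[OF that])
  define xs where "xs n = fst (ubp_seq st Cf n)" for n
  define rs where "rs n = snd (ubp_seq st Cf n)" for n
  define zs where "zs n = fst (st (xs n) (rs n) (real n + 1))" for n
  have xsS: "xs (Suc n) = snd (st (xs n) (rs n) (real n + 1))" for n
    by (simp add: xs_def rs_def Let_def)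
  have rsS: "rs (Suc n) = min (rs n / 2) (1 / (2 * (Cf (zs n) + 1)))" for n
    by (simp add: xs_def rs_def zs_def Let_def)
  have inv: "xs n \<in> X \<and> rs n > 0" for n
  proof (induction n)
    case 0
    then show ?case using bpe_0[OF B] by (simp add: xs_def rs_def)
  next
    case (Suc n)
    then have "zs n \<in> A" "xs (Suc n) \<in> X" using st[of "xs n" "rs n"] unfolding zs_def xsS by auto
    then show ?case using Cf[of "zs n"] Suc unfolding rsS by auto
  qed
  have zsA: "zs n \<in> A" for n using st[of "xs n" "rs n"] inv unfolding zs_def by auto
  have stepN: "N (\<lambda>w. xs (Suc n) w - xs n w) \<le> rs n" for n
    using st[of "xs n" "rs n"] inv unfolding xsS by auto
  have big: "real n + 1 < norm (L (zs n) (xs (Suc n)))" for n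
    using st[of "xs n" "rs n"] inv unfolding xsS zs_def by auto
  have half: "rs (Suc n) \<le> rs n / 2" for n unfolding rsS by simp
  have small: "rs (Suc n) \<le> 1 / (2 * (Cf (zs n) + 1))" for n unfolding rsS by simp
  have rs_le: "rs n \<le> (1/2) ^ n" for n
  proof (induction n)
    case 0 then show ?case by (simp add: rs_def)
  next
    case (Suc n) then show ?case using half[of n] by simp
  qed
  have tail: "N (\<lambda>w. xs (n + k) w - xs n w) \<le> 2 * rs n - 2 * rs (n + k)" for n k
  proof (induction k)
    case 0 then show ?case using bpe_N_self[OF B, of "xs n"] inv by simp
  next
    case (Suc k)
    have "N (\<lambda>w. xs (Suc (n + k)) w - xs n w)
        \<le> N (\<lambda>w. xs (Suc (n + k)) w - xs (n + k) w) + N (\<lambda>w. xs (n + k) w - xs n w)"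
      by (rule bpe_tri_diff[OF B]) (use inv in auto)
    then show ?case using Suc stepN[of "n + k"] half[of "n + k"] by simp
  qed
  have cauchy_le: "N (\<lambda>w. xs m w - xs n w) \<le> 2 * rs n" if "n \<le> m" for m n
    using tail[of n "m - n"] inv[of m] that by simp
  have cauchy: "\<exists>M. \<forall>m\<ge>M. \<forall>n\<ge>M. N (\<lambda>z. xs m z - xs n z) < e" if e: "e > 0" for e
  proof -
    obtain M where M: "(1/2::real) ^ M < e / 2" using real_arch_pow_inv[of "e/2" "1/2"] e by auto
    have "N (\<lambda>z. xs m z - xs n z) < e" if "m \<ge> M" "n \<ge> M" for m n
    proof -
      have le: "2 * rs k < e" if "k \<ge> M" for k
      proof -
        have "rs k \<le> (1/2) ^ k" by (rule rs_le)
        also have "(1/2::real) ^ k \<le> (1/2) ^ M" using that by (intro power_decreasing) auto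
        finally show ?thesis using M by linarith
      qed
      show ?thesis
      proof (cases "n \<le> m")
        case True then show ?thesis using cauchy_le[OF True] le[OF \<open>n \<ge> M\<close>] by linarith
      next
        case False
        then have "N (\<lambda>z. xs n z - xs m z) < e" using cauchy_le[of m n] le[OF \<open>m \<ge> M\<close>] by linarith
        then show ?thesis using bpe_sym[OF B inv[THEN conjunct1] inv[THEN conjunct1], of n m] by simp
      qed
    qed
    then show ?thesis by blast
  qed
  obtain x where x: "x \<in> X" and lim: "(\<lambda>n. N (\<lambda>z. xs n z - x z)) \<longlonglongrightarrow> 0"
    using bpe_complete[OF B, of xs] inv cauchy by blast
  have near: "N (\<lambda>w. x w - xs (Suc j) w) \<le> 2 * rs (Suc j)" for j
  proof (rule tendsto_lowerbound)
    show "(\<lambda>m. N (\<lambda>z. xs m z - x z) + 2 * rs (Suc j)) \<longlonglongrightarrow> 2 * rs (Suc j)"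
      using tendsto_add[OF lim tendsto_const[of "2 * rs (Suc j)"]] by simp
    show "\<forall>\<^sub>F m in sequentially. N (\<lambda>w. x w - xs (Suc j) w) \<le> N (\<lambda>z. xs m z - x z) + 2 * rs (Suc j)"
    proof (rule eventually_sequentiallyI[of "Suc j"])
      fix m assume m: "Suc j \<le> m"
      have "N (\<lambda>w. x w - xs (Suc j) w) \<le> N (\<lambda>w. x w - xs m w) + N (\<lambda>w. xs m w - xs (Suc j) w)"
        by (rule bpe_tri_diff[OF B]) (use inv x in auto)
      also have "N (\<lambda>w. x w - xs m w) = N (\<lambda>w. xs m w - x w)" using bpe_sym[OF B inv[THEN conjunct1] x] by simp
      finally show "N (\<lambda>w. x w - xs (Suc j) w) \<le> N (\<lambda>z. xs m z - x z) + 2 * rs (Suc j)"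
        using cauchy_le[OF m] by linarith
    qed
  qed simp
  obtain Bd where Bd: "\<And>z. z \<in> A \<Longrightarrow> norm (L z x) \<le> Bd" using pw[OF x] by blast
  obtain j :: nat where j: "Bd \<le> real j" using real_arch_simple by blast
  let ?z = "zs j"
  have Cz: "Cf ?z \<ge> 0" using Cf zsA by blast
  have "norm (L ?z (\<lambda>w. xs (Suc j) w - x w)) \<le> Cf ?z * N (\<lambda>w. xs (Suc j) w - x w)"
    using Cf[OF zsA[of j]] bpe_diff[OF B] inv x by blast
  also have "N (\<lambda>w. xs (Suc j) w - x w) = N (\<lambda>w. x w - xs (Suc j) w)" using bpe_sym[OF B inv[THEN conjunct1] x] by simp
  also have "Cf ?z * N (\<lambda>w. x w - xs (Suc j) w) \<le> Cf ?z * (2 * rs (Suc j))"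
    using near Cz by (intro mult_left_mono) auto
  also have "\<dots> \<le> Cf ?z * (2 * (1 / (2 * (Cf ?z + 1))))"
    using small[of j] Cz by (intro mult_left_mono) auto
  also have "\<dots> < 1" using Cz by (simp add: field_simps)
  finally have sm: "norm (L ?z (\<lambda>w. xs (Suc j) w - x w)) < 1" .
  have "L ?z x = L ?z (xs (Suc j)) - L ?z (\<lambda>w. xs (Suc j) w - x w)"
    using diffL[OF zsA inv[THEN conjunct1] x] by simp
  then have "norm (L ?z x) \<ge> norm (L ?z (xs (Suc j))) - norm (L ?z (\<lambda>w. xs (Suc j) w - x w))"
    using norm_triangle_ineq2[of "L ?z (xs (Suc j))" "L ?z (\<lambda>w. xs (Suc j) w - x w)"] by simp
  then have "norm (L ?z x) > real j" using big[of j] sm by linarith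
  then show False using Bd[OF zsA[of j]] j by linarith
qed

lemma ubp_pt:
  fixes a :: "'i \<Rightarrow> complex" and w :: "'i \<Rightarrow> complex"
  assumes B: "banach_bpe X N" and wA: "\<And>z. z \<in> A \<Longrightarrow> w z \<in> disc"
    and pw: "\<And>f. f \<in> X \<Longrightarrow> \<exists>Bd. \<forall>z\<in>A. norm (a z * f (w z)) \<le> Bd"
  shows "\<exists>C. \<forall>z\<in>A. \<forall>f\<in>X. norm (a z * f (w z)) \<le> C * N f"
proof (rule ubp[where L = "\<lambda>z f. a z * f (w z)", OF B])
  obtain Cw where Cw0: "\<And>w. Cw w \<ge> 0" and Cw: "\<And>w f. w \<in> disc \<Longrightarrow> f \<in> X \<Longrightarrow> norm (f w) \<le> Cw w * N f"
    using bpe_pteval[OF B] by blast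
  show "\<exists>C\<ge>0. \<forall>f\<in>X. norm (a z * f (w z)) \<le> C * N f" if z: "z \<in> A" for z
  proof (intro exI[of _ "norm (a z) * Cw (w z)"] conjI ballI)
    show "0 \<le> norm (a z) * Cw (w z)" using Cw0 by simp
    fix f assume f: "f \<in> X"
    have "norm (a z * f (w z)) = norm (a z) * norm (f (w z))" by (simp add: norm_mult)
    also have "\<dots> \<le> norm (a z) * (Cw (w z) * N f)" using Cw[OF wA[OF z] f] by (intro mult_left_mono) auto
    finally show "norm (a z * f (w z)) \<le> norm (a z) * Cw (w z) * N f" by (simp add: mult.assoc)
  qed
next
  show "a z * (\<lambda>w. f w + g w) (w z) = a z * f (w z) + a z * g (w z)" for z f g
    by (simp add: distrib_left)
next
  show "a z * (\<lambda>w. c * f w) (w z) = c * (a z * f (w z))" for z f c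
    by (simp add: mult.left_commute)
next
  show "\<exists>Bd. \<forall>z\<in>A. norm (a z * f (w z)) \<le> Bd" if "f \<in> X" for f using pw[OF that] .
qed

lemma to_bdry_eventually_D:
  assumes "eventually P to_bdry"
  obtains R where "0 \<le> R" "R < 1" "\<And>z. R < norm z \<Longrightarrow> norm z < 1 \<Longrightarrow> P z"
proof -
  obtain Q where Q: "eventually Q (at_left (1::real))" and QP: "\<And>z. Q (norm z) \<Longrightarrow> P z"
    using assms unfolding to_bdry_def eventually_filtercomap by blast
  obtain b where b: "b < 1" "\<And>y. y > b \<Longrightarrow> y < 1 \<Longrightarrow> Q y"
    using Q unfolding eventually_at_left_field by blast
  show ?thesis
    by (rule that[of "max b 0"]) (use b QP in auto)
qed

lemma to_bdry_eventually_I: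
  assumes "R < 1" "\<And>z. R < norm z \<Longrightarrow> norm z < 1 \<Longrightarrow> P z"
  shows "eventually P to_bdry"
  unfolding to_bdry_def eventually_filtercomap
proof (intro exI conjI)
  show "eventually (\<lambda>t. R < t \<and> t < 1) (at_left (1::real))"
    using assms(1) by (intro eventually_at_leftI[of R]) auto
qed (use assms in auto)

lemma to_bdry_in_disc: "eventually (\<lambda>z. z \<in> disc) to_bdry"
  by (rule to_bdry_eventually_I[of 0]) auto

lemma bounded_on_disc:
  fixes F :: "complex \<Rightarrow> 'a::real_normed_vector"
  assumes cont: "continuous_on disc F" and lim: "(F \<longlongrightarrow> 0) to_bdry"
  shows "\<exists>Bd. \<forall>z\<in>disc. norm (F z) \<le> Bd"
proof -
  have "eventually (\<lambda>z. norm (F z) < 1) to_bdry"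
    using tendsto_norm_zero[OF lim] by (rule order_tendstoD) simp
  then obtain R where R: "0 \<le> R" "R < 1" "\<And>z. R < norm z \<Longrightarrow> norm z < 1 \<Longrightarrow> norm (F z) < 1"
    by (rule to_bdry_eventually_D) blast
  have sub: "cball 0 R \<subseteq> disc" using R by auto
  have "compact (F ` cball 0 R)"
    by (rule compact_continuous_image[OF continuous_on_subset[OF cont sub] compact_cball])
  then obtain a where a: "\<And>y. y \<in> F ` cball 0 R \<Longrightarrow> norm y \<le> a"
    using compact_imp_bounded[of "F ` cball 0 R"] unfolding bounded_iff by blast
  show ?thesis
  proof (intro exI[of _ "max a 1"] ballI)
    fix z :: complex assume z: "z \<in> disc"
    show "norm (F z) \<le> max a 1"
    proof (cases "norm z \<le> R")
      case True
      then have "F z \<in> F ` cball 0 R" by simp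
      then show ?thesis using a[of "F z"] by linarith
    next
      case False
      have "norm z < 1" using z by simp
      then have "norm (F z) < 1" using R(3)[of z] False by linarith
      then show ?thesis by linarith
    qed
  qed
qed

lemma weighted_tendsto_iff:
  fixes \<omega> :: "complex \<Rightarrow> real" and G :: "complex \<Rightarrow> complex"
  assumes "\<And>z. z \<in> disc \<Longrightarrow> \<omega> z \<ge> 0"
  shows "((\<lambda>z. \<omega> z * norm (G z)) \<longlongrightarrow> 0) to_bdry \<longleftrightarrow> ((\<lambda>z. of_real (\<omega> z) * G z) \<longlongrightarrow> 0) to_bdry"
proof -
  have "eventually (\<lambda>z. \<omega> z * norm (G z) = norm (of_real (\<omega> z) * G z)) to_bdry"
    using to_bdry_in_disc by eventually_elim (use assms in \<open>simp add: norm_mult\<close>)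
  then have "((\<lambda>z. \<omega> z * norm (G z)) \<longlongrightarrow> 0) to_bdry \<longleftrightarrow> ((\<lambda>z. norm (of_real (\<omega> z) * G z)) \<longlongrightarrow> 0) to_bdry"
    by (rule tendsto_cong)
  also have "\<dots> \<longleftrightarrow> ((\<lambda>z. of_real (\<omega> z) * G z) \<longlongrightarrow> 0) to_bdry" by (rule tendsto_norm_zero_iff)
  finally show ?thesis .
qed

lemma tw_facts:
  assumes "typical_weight v"
  shows "continuous_on disc v" "\<And>z. z \<in> disc \<Longrightarrow> 0 < v z"
  using assms unfolding typical_weight_def by blast+

lemma seg_in_disc: "b \<in> disc \<Longrightarrow> c \<in> disc \<Longrightarrow> closed_segment b c \<subseteq> disc"
  by (rule closed_segment_subset) (auto simp: convex_ball)

lemma primitive_disc: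
  assumes holF: "F holomorphic_on disc" and z: "z \<in> disc"
  shows "((\<lambda>z. contour_integral (linepath 0 z) F) has_field_derivative F z) (at z)"
proof (rule triangle_contour_integrals_starlike_primitive[where S = disc])
  show "continuous_on disc F" using holF by (rule holomorphic_on_imp_continuous_on)
  show "(0::complex) \<in> disc" "open disc" "z \<in> disc" using z by auto
  show "closed_segment 0 y \<subseteq> disc" if "y \<in> disc" for y using that by (intro seg_in_disc) auto
  show "contour_integral (linepath 0 b) F + contour_integral (linepath b c) F + contour_integral (linepath c 0) F = 0"
    if "closed_segment b c \<subseteq> disc" for b c
  proof -
    have bc: "b \<in> disc" "c \<in> disc" using that ends_in_segment by blast+
    have "convex hull {0, b, c} \<subseteq> disc"
      using bc by (intro hull_minimal) (auto simp: convex_ball)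
    then have "F holomorphic_on convex hull {0, b, c}" using holF by (rule holomorphic_on_subset[rotated])
    then have "(F has_contour_integral 0) (linepath 0 b +++ linepath b c +++ linepath c 0)"
      by (rule Cauchy_theorem_triangle)
    then show ?thesis by (rule has_chain_integral_chain_integral3)
  qed
qed

lemma Top_facts:
  assumes g: "g holomorphic_on disc" and f: "f holomorphic_on disc"
  shows "Top g f holomorphic_on disc" and "\<And>z. z \<in> disc \<Longrightarrow> deriv (Top g f) z = f z * deriv g z"
    and "Top g f 0 = 0"
proof -
  have dg: "deriv g holomorphic_on disc" using g by (rule holomorphic_deriv) simp
  have F: "(\<lambda>w. f w * deriv g w) holomorphic_on disc" using f dg by (rule holomorphic_on_mult)
  have D: "(Top g f has_field_derivative f z * deriv g z) (at z)" if "z \<in> disc" for z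
    unfolding Top_def using primitive_disc[OF F that] .
  show "Top g f holomorphic_on disc"
    using D by (subst holomorphic_on_open) (auto, blast)
  show "deriv (Top g f) z = f z * deriv g z" if "z \<in> disc" for z
    using D[OF that] by (rule DERIV_imp_deriv)
  show "Top g f 0 = 0" unfolding Top_def by simp
qed

lemma part1:
  assumes tw: "typical_weight v" and B: "banach_bpe X N"
    and u: "u holomorphic_on disc" and phi: "\<phi> holomorphic_on disc" "\<phi> ` disc \<subseteq> disc"
  shows "bounded_into X N (Wop u \<phi>) (Hv0 v) (Hv_norm v) \<longleftrightarrow>
           (\<forall>f\<in>X. ((\<lambda>z. of_real (v z) * u z * f (\<phi> z)) \<longlongrightarrow> 0) to_bdry)"
proof -
  have v0: "\<And>z. z \<in> disc \<Longrightarrow> v z \<ge> 0" using tw_facts(2)[OF tw] less_imp_le by blast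
  have key: "((\<lambda>z. v z * norm (Wop u \<phi> f z)) \<longlongrightarrow> 0) to_bdry \<longleftrightarrow>
      ((\<lambda>z. of_real (v z) * u z * f (\<phi> z)) \<longlongrightarrow> 0) to_bdry" for f
    using weighted_tendsto_iff[of v "Wop u \<phi> f", OF v0] by (simp add: Wop_def mult.assoc)
  have comp: "(\<lambda>z. f (\<phi> z)) holomorphic_on disc" if "f \<in> X" for f
    using holomorphic_on_compose_gen[OF phi(1) bpe_hol[OF B that] phi(2)] by (simp add: o_def)
  have hol: "Wop u \<phi> f holomorphic_on disc" if "f \<in> X" for f
    unfolding Wop_def by (rule holomorphic_on_mult[OF u comp[OF that]])
  show ?thesis
  proof
    assume "bounded_into X N (Wop u \<phi>) (Hv0 v) (Hv_norm v)"
    then show "\<forall>f\<in>X. ((\<lambda>z. of_real (v z) * u z * f (\<phi> z)) \<longlongrightarrow> 0) to_bdry"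
      unfolding bounded_into_def Hv0_def using key by blast
  next
    assume lim: "\<forall>f\<in>X. ((\<lambda>z. of_real (v z) * u z * f (\<phi> z)) \<longlongrightarrow> 0) to_bdry"
    have pw: "\<exists>Bd. \<forall>z\<in>disc. norm (of_real (v z) * u z * f (\<phi> z)) \<le> Bd" if f: "f \<in> X" for f
    proof (rule bounded_on_disc)
      have "continuous_on disc (\<lambda>z. f (\<phi> z))" using comp[OF f] by (rule holomorphic_on_imp_continuous_on)
      moreover have "continuous_on disc u" using u by (rule holomorphic_on_imp_continuous_on)
      moreover have "continuous_on disc v" by (rule tw_facts(1)[OF tw])
      ultimately show "continuous_on disc (\<lambda>z. of_real (v z) * u z * f (\<phi> z))"
        by (intro continuous_intros) auto
      show "((\<lambda>z. of_real (v z) * u z * f (\<phi> z)) \<longlongrightarrow> 0) to_bdry" using lim f by blast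
    qed
    have "\<exists>C. \<forall>z\<in>disc. \<forall>f\<in>X. norm (of_real (v z) * u z * f (\<phi> z)) \<le> C * N f"
      by (rule ubp_pt[OF B]) (use phi(2) pw in \<open>auto simp: image_subset_iff\<close>)
    then obtain C where C: "\<And>z f. z \<in> disc \<Longrightarrow> f \<in> X \<Longrightarrow> norm (of_real (v z) * u z * f (\<phi> z)) \<le> C * N f"
      by blast
    have mem: "Wop u \<phi> f \<in> Hv0 v" if f: "f \<in> X" for f
      unfolding Hv0_def using hol[OF f] key lim f by blast
    have nrm: "Hv_norm v (Wop u \<phi> f) \<le> C * N f" if f: "f \<in> X" for f
      unfolding Hv_norm_def
    proof (rule cSUP_least)
      show "disc \<noteq> {}" by auto
      fix z :: complex assume z: "z \<in> disc"
      have "v z * norm (Wop u \<phi> f z) = norm (of_real (v z) * u z * f (\<phi> z))"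
        using v0[OF z] by (simp add: Wop_def norm_mult mult.assoc)
      then show "v z * norm (Wop u \<phi> f z) \<le> C * N f" using C[OF z f] by simp
    qed
    show "bounded_into X N (Wop u \<phi>) (Hv0 v) (Hv_norm v)"
      unfolding bounded_into_def using mem nrm by blast
  qed
qed

lemma part2:
  assumes tw: "typical_weight v" and B: "banach_bpe X N" and g: "g holomorphic_on disc"
  shows "bounded_into X N (Top g) (Bv0 v) (Bv_norm v) \<longleftrightarrow>
           (\<forall>f\<in>X. ((\<lambda>z. of_real (v z) * deriv g z * f z) \<longlongrightarrow> 0) to_bdry)"
proof -
  have v0: "\<And>z. z \<in> disc \<Longrightarrow> v z \<ge> 0" using tw_facts(2)[OF tw] less_imp_le by blast
  have dg: "deriv g holomorphic_on disc" using g by (rule holomorphic_deriv) simp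
  have key: "((\<lambda>z. v z * norm (deriv (Top g f) z)) \<longlongrightarrow> 0) to_bdry \<longleftrightarrow>
      ((\<lambda>z. of_real (v z) * deriv g z * f z) \<longlongrightarrow> 0) to_bdry" if f: "f \<in> X" for f
  proof -
    have "eventually (\<lambda>z. v z * norm (deriv (Top g f) z) = v z * norm (deriv g z * f z)) to_bdry"
      using to_bdry_in_disc by eventually_elim (simp add: Top_facts(2)[OF g bpe_hol[OF B f]] mult.commute)
    then have "((\<lambda>z. v z * norm (deriv (Top g f) z)) \<longlongrightarrow> 0) to_bdry \<longleftrightarrow>
       ((\<lambda>z. v z * norm (deriv g z * f z)) \<longlongrightarrow> 0) to_bdry" by (rule tendsto_cong)
    also have "\<dots> \<longleftrightarrow> ((\<lambda>z. of_real (v z) * (deriv g z * f z)) \<longlongrightarrow> 0) to_bdry"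
      by (rule weighted_tendsto_iff[of v "\<lambda>z. deriv g z * f z", OF v0])
    finally show ?thesis by (simp add: mult.assoc)
  qed
  show ?thesis
  proof
    assume "bounded_into X N (Top g) (Bv0 v) (Bv_norm v)"
    then show "\<forall>f\<in>X. ((\<lambda>z. of_real (v z) * deriv g z * f z) \<longlongrightarrow> 0) to_bdry"
      unfolding bounded_into_def Bv0_def using key by blast
  next
    assume lim: "\<forall>f\<in>X. ((\<lambda>z. of_real (v z) * deriv g z * f z) \<longlongrightarrow> 0) to_bdry"
    have pw: "\<exists>Bd. \<forall>z\<in>disc. norm (of_real (v z) * deriv g z * f z) \<le> Bd" if f: "f \<in> X" for f
    proof (rule bounded_on_disc)
      have "continuous_on disc f" using bpe_hol[OF B f] by (rule holomorphic_on_imp_continuous_on)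
      moreover have "continuous_on disc (deriv g)" using dg by (rule holomorphic_on_imp_continuous_on)
      moreover have "continuous_on disc v" by (rule tw_facts(1)[OF tw])
      ultimately show "continuous_on disc (\<lambda>z. of_real (v z) * deriv g z * f z)"
        by (intro continuous_intros) auto
      show "((\<lambda>z. of_real (v z) * deriv g z * f z) \<longlongrightarrow> 0) to_bdry" using lim f by blast
    qed
    have "\<exists>C. \<forall>z\<in>disc. \<forall>f\<in>X. norm (of_real (v z) * deriv g z * f z) \<le> C * N f"
      using ubp_pt[OF B, of disc "\<lambda>z. z" "\<lambda>z. of_real (v z) * deriv g z"] pw by auto
    then obtain C where C: "\<And>z f. z \<in> disc \<Longrightarrow> f \<in> X \<Longrightarrow> norm (of_real (v z) * deriv g z * f z) \<le> C * N f"
      by blast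
    have mem: "Top g f \<in> Bv0 v" if f: "f \<in> X" for f
      unfolding Bv0_def using Top_facts(1)[OF g bpe_hol[OF B f]] key[OF f] lim f by blast
    have nrm: "Bv_norm v (Top g f) \<le> C * N f" if f: "f \<in> X" for f
    proof -
      have "(SUP z\<in>disc. v z * norm (deriv (Top g f) z)) \<le> C * N f"
      proof (rule cSUP_least)
        show "disc \<noteq> {}" by auto
        fix z :: complex assume z: "z \<in> disc"
        have "v z * norm (deriv (Top g f) z) = norm (of_real (v z) * deriv g z * f z)"
          using v0[OF z] Top_facts(2)[OF g bpe_hol[OF B f] z] by (simp add: norm_mult)
        then show "v z * norm (deriv (Top g f) z) \<le> C * N f" using C[OF z f] by simp
      qed
      then show ?thesis unfolding Bv_norm_def using Top_facts(3)[OF g bpe_hol[OF B f]] by simp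
    qed
    show "bounded_into X N (Top g) (Bv0 v) (Bv_norm v)"
      unfolding bounded_into_def using mem nrm by blast
  qed
qed

lemma comparison:
  fixes H h :: "complex \<Rightarrow> complex" and z :: complex and t0 \<beta> K :: real
  assumes H: "\<And>w. w \<in> disc \<Longrightarrow> (H has_field_derivative h w) (at w)"
    and z: "z \<in> disc" and t0: "0 \<le> t0" "t0 \<le> 1" and \<beta>: "\<beta> > 0" and K: "K \<ge> 0"
    and bnd: "\<And>t. t0 \<le> t \<Longrightarrow> t \<le> 1 \<Longrightarrow>
       (1 - (norm (of_real t * z))^2) powr (\<beta>+1) * norm (h (of_real t * z)) \<le> K"
  shows "norm (H z - H (of_real t0 * z)) \<le> K / \<beta> * (1 - norm z) powr (-\<beta>)"
proof (cases "t0 = 1")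
  case True
  then show ?thesis using K \<beta> by simp
next
  case False
  with t0 have t01: "t0 < 1" by simp
  define r where "r = norm z"
  have r: "0 \<le> r" "r < 1" using z by (auto simp: r_def)
  have pos: "0 < 1 - t * r" if "0 \<le> t" "t \<le> 1" for t
  proof -
    have "t * r \<le> 1 * r" using that r by (intro mult_right_mono) auto
    then show ?thesis using r by linarith
  qed
  have indisc: "of_real t * z \<in> disc" if "0 \<le> t" "t \<le> 1" for t
  proof -
    have "norm (of_real t * z) = t * r" using that by (simp add: r_def norm_mult)
    then show ?thesis using pos[OF that] by simp
  qed
  define f where "f = (\<lambda>t::real. H (of_real t * z))"
  define \<phi> where "\<phi> = (\<lambda>t::real. K / \<beta> * (1 - t * r) powr (-\<beta>))"
  have df: "(f has_vector_derivative (z * h (of_real t * z))) (at t)" if "0 \<le> t" "t \<le> 1" for t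
  proof -
    have "((\<lambda>x. x * z) has_field_derivative z) (at (of_real t))"
      by (auto intro!: derivative_eq_intros)
    then have 1: "((\<lambda>x. of_real x * z) has_vector_derivative z) (at t)"
      by (rule has_vector_derivative_real_field)
    have 2: "(H has_field_derivative h (of_real t * z)) (at (of_real t * z))"
      by (rule H[OF indisc[OF that]])
    show ?thesis using field_vector_diff_chain_at[OF 1 2] by (simp add: f_def o_def)
  qed
  have dphi: "(\<phi> has_real_derivative (K * r * (1 - t * r) powr (-\<beta> - 1))) (at t)" if "0 \<le> t" "t \<le> 1" for t
  proof -
    have a: "((\<lambda>y. y powr (-\<beta>)) has_real_derivative (-\<beta>) * (1 - t * r) powr (-\<beta> - 1)) (at (1 - t * r))"
      by (rule has_real_derivative_powr[OF pos[OF that]])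
    have b: "((\<lambda>t. 1 - t * r) has_real_derivative (- r)) (at t)"
      by (auto intro!: derivative_eq_intros)
    have "((\<lambda>t. (1 - t * r) powr (-\<beta>)) has_real_derivative (-\<beta>) * (1 - t * r) powr (-\<beta> - 1) * (- r)) (at t)"
      by (rule DERIV_chain2[OF a b])
    then have "(\<phi> has_real_derivative K / \<beta> * ((-\<beta>) * (1 - t * r) powr (-\<beta> - 1) * (- r))) (at t)"
      unfolding \<phi>_def by (rule DERIV_cmult)
    then show ?thesis by (rule DERIV_cong) (use \<beta> in \<open>simp add: field_simps\<close>)
  qed
  have "norm (f 1 - f t0) \<le> \<phi> 1 - \<phi> t0"
  proof (rule differentiable_bound_general[OF t01])
    show "continuous_on {t0..1} f"
    proof (intro continuous_at_imp_continuous_on ballI)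
      fix x assume "x \<in> {t0..1}"
      then show "isCont f x" using has_vector_derivative_continuous[OF df[of x]] t0 by auto
    qed
    show "continuous_on {t0..1} \<phi>"
    proof (intro continuous_at_imp_continuous_on ballI)
      fix x assume "x \<in> {t0..1}"
      then show "isCont \<phi> x" using DERIV_isCont[OF dphi[of x]] t0 by auto
    qed
    show "(f has_vector_derivative (z * h (of_real x * z))) (at x)" if "t0 < x" "x < 1" for x
      using df that t0 by simp
    show "(\<phi> has_vector_derivative (K * r * (1 - x * r) powr (-\<beta> - 1))) (at x)" if "t0 < x" "x < 1" for x
      using dphi[of x] that t0 by (simp add: has_real_derivative_iff_has_vector_derivative)
    show "norm (z * h (of_real x * z)) \<le> K * r * (1 - x * r) powr (-\<beta> - 1)" if x: "t0 < x" "x < 1" for x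
    proof -
      have x0: "0 \<le> x" "x \<le> 1" using x t0 by auto
      have p: "0 < 1 - x * r" by (rule pos[OF x0])
      have nx: "norm (of_real x * z) = x * r" using x0 by (simp add: r_def norm_mult)
      have xr: "0 \<le> x * r" "x * r \<le> 1" using x0 r p by auto
      have sq: "(x * r)^2 \<le> x * r" using mult_left_le[OF xr(2) xr(1)] by (simp add: power2_eq_square)
      have b1: "(1 - (x * r)^2) powr (\<beta>+1) * norm (h (of_real x * z)) \<le> K"
        using bnd[of x] x0 x nx by simp
      have "(1 - x * r) powr (\<beta>+1) \<le> (1 - (x * r)^2) powr (\<beta>+1)"
        using p sq \<beta> by (intro powr_mono2) auto
      then have b2: "(1 - x * r) powr (\<beta>+1) * norm (h (of_real x * z)) \<le> K"
        using b1 by (meson mult_right_mono norm_ge_zero order_trans)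
      have pp: "0 < (1 - x * r) powr (\<beta>+1)" using p by simp
      have "norm (h (of_real x * z)) \<le> K / (1 - x * r) powr (\<beta>+1)"
        using b2 pp by (simp add: pos_le_divide_eq mult.commute)
      also have "K / (1 - x * r) powr (\<beta>+1) = K * (1 - x * r) powr (-\<beta> - 1)"
        using powr_minus[of "1 - x * r" "\<beta> + 1"] by (simp add: divide_inverse)
      finally have "r * norm (h (of_real x * z)) \<le> r * (K * (1 - x * r) powr (-\<beta> - 1))"
        using r by (intro mult_left_mono) auto
      then show ?thesis by (simp add: norm_mult r_def[symmetric] mult.assoc mult.left_commute)
    qed
  qed
  also have "\<phi> 1 - \<phi> t0 \<le> \<phi> 1" using K \<beta> by (simp add: \<phi>_def)
  finally show ?thesis by (simp add: f_def \<phi>_def r_def)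
qed

lemma to_bdry_ex:
  assumes "eventually P to_bdry"
  shows "\<exists>R. 0 \<le> R \<and> R < 1 \<and> (\<forall>z. R < norm z \<and> norm z < 1 \<longrightarrow> P z)"
proof -
  obtain R where "0 \<le> R" "R < 1" "\<And>z. R < norm z \<Longrightarrow> norm z < 1 \<Longrightarrow> P z"
    using to_bdry_eventually_D[OF assms] by blast
  then show ?thesis by blast
qed

lemma wfact:
  fixes r \<beta> :: real
  assumes "0 \<le> r" "r < 1" "0 \<le> \<beta>"
  shows "(1 - r^2) powr \<beta> * (1 - r) powr (-\<beta>) \<le> 2 powr \<beta>"
proof -
  have "(1 - r^2) = (1 + r) * (1 - r)" by (simp add: power2_eq_square algebra_simps)
  then have "(1 - r^2) powr \<beta> * (1 - r) powr (-\<beta>) = (1 + r) powr \<beta> * ((1 - r) powr \<beta> * (1 - r) powr (-\<beta>))"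
    by (simp add: powr_mult mult.assoc)
  also have "(1 - r) powr \<beta> * (1 - r) powr (-\<beta>) = 1"
    using assms by (simp add: powr_minus)
  also have "(1 + r) powr \<beta> * 1 \<le> 2 powr \<beta>" using assms by (simp add: powr_mono2)
  finally show ?thesis .
qed

lemma growth:
  fixes H h :: "complex \<Rightarrow> complex" and \<beta> K :: real
  assumes H: "\<And>w. w \<in> disc \<Longrightarrow> (H has_field_derivative h w) (at w)" and H0: "H 0 = 0"
    and \<beta>: "\<beta> > 0" and K: "K \<ge> 0"
    and bnd: "\<And>w. w \<in> disc \<Longrightarrow> (1 - (norm w)^2) powr (\<beta>+1) * norm (h w) \<le> K"
    and z: "z \<in> disc"
  shows "(1 - (norm z)^2) powr \<beta> * norm (H z) \<le> K * 2 powr \<beta> / \<beta>"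
proof -
  have ind: "of_real t * z \<in> disc" if "0 \<le> t" "t \<le> 1" for t :: real
  proof -
    have "norm (of_real t * z) = t * norm z" using that by (simp add: norm_mult)
    also have "\<dots> \<le> 1 * norm z" using that by (intro mult_right_mono) auto
    finally show ?thesis using z by simp
  qed
  have c: "norm (H z - H (of_real 0 * z)) \<le> K / \<beta> * (1 - norm z) powr (-\<beta>)"
    by (rule comparison[OF H z _ _ \<beta> K]) (auto intro: bnd ind)
  have Hz: "norm (H z) \<le> K / \<beta> * (1 - norm z) powr (-\<beta>)" using c H0 by simp
  have "(1 - (norm z)^2) powr \<beta> * norm (H z) \<le> (1 - (norm z)^2) powr \<beta> * (K / \<beta> * (1 - norm z) powr (-\<beta>))"
    using Hz by (intro mult_left_mono) auto
  also have "\<dots> = K / \<beta> * ((1 - (norm z)^2) powr \<beta> * (1 - norm z) powr (-\<beta>))" by simp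
  also have "\<dots> \<le> K / \<beta> * 2 powr \<beta>"
    using z \<beta> K by (intro mult_left_mono wfact) auto
  finally show ?thesis by simp
qed

lemma deriv_cont:
  assumes H: "\<And>w. w \<in> disc \<Longrightarrow> (H has_field_derivative h w) (at w)"
  shows "continuous_on disc H"
proof (intro continuous_at_imp_continuous_on ballI)
  fix x assume "x \<in> disc"
  then show "isCont H x" by (rule DERIV_isCont[OF H])
qed

lemma weight_to_zero: "\<beta> > 0 \<Longrightarrow> ((\<lambda>t::real. (1 - t^2) powr \<beta>) \<longlongrightarrow> 0) (at_left 1)"
proof -
  assume b: "\<beta> > 0"
  have "((\<lambda>t::real. 1 - t^2) \<longlongrightarrow> 1 - 1^2) (at_left 1)" by (intro tendsto_intros)
  then have l: "((\<lambda>t::real. 1 - t^2) \<longlongrightarrow> 0) (at_left 1)" by simp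
  have ev: "eventually (\<lambda>t::real. 0 \<le> 1 - t^2) (at_left 1)"
  proof -
    have "eventually (\<lambda>t::real. t \<in> {0<..<1}) (at_left 1)" by (rule eventually_at_left_real) simp
    then show ?thesis by eventually_elim (auto simp: power2_eq_square mult_le_one)
  qed
  show ?thesis by (rule tendsto_zero_powrI[OF l tendsto_const ev b])
qed

lemma littleo:
  fixes H h :: "complex \<Rightarrow> complex" and \<beta> :: real
  assumes H: "\<And>w. w \<in> disc \<Longrightarrow> (H has_field_derivative h w) (at w)"
    and \<beta>: "\<beta> > 0"
    and lim: "((\<lambda>w. (1 - (norm w)^2) powr (\<beta>+1) * norm (h w)) \<longlongrightarrow> 0) to_bdry"
  shows "((\<lambda>z. (1 - (norm z)^2) powr \<beta> * norm (H z)) \<longlongrightarrow> 0) to_bdry"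
  unfolding tendsto_iff
proof (intro allI impI)
  fix e :: real assume e: "e > 0"
  define \<epsilon> where "\<epsilon> = e * \<beta> / (4 * 2 powr \<beta>)"
  have \<epsilon>: "\<epsilon> > 0" using e \<beta> by (simp add: \<epsilon>_def)
  have "eventually (\<lambda>w. dist ((1 - (norm w)^2) powr (\<beta>+1) * norm (h w)) 0 < \<epsilon>) to_bdry"
    by (rule tendstoD[OF lim \<epsilon>])
  from to_bdry_ex[OF this] obtain R where RR0: "0 \<le> R \<and> R < 1 \<and> (\<forall>w. R < norm w \<and> norm w < 1 \<longrightarrow>
      dist ((1 - (norm w)^2) powr (\<beta>+1) * norm (h w)) 0 < \<epsilon>)" ..
  have R: "0 \<le> R" "R < 1" using RR0 by simp_all
  have RR: "dist ((1 - (norm w)^2) powr (\<beta>+1) * norm (h w)) 0 < \<epsilon>" if "R < norm w" "norm w < 1" for w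
    using RR0 that by blast
  have Rb: "(1 - (norm w)^2) powr (\<beta>+1) * norm (h w) \<le> \<epsilon>" if "R < norm w" "norm w < 1" for w
    using RR[OF that] by simp
  define R1 where "R1 = (1 + R) / 2"
  have R1: "0 \<le> R1" "R1 < 1" "R < R1" using R by (auto simp: R1_def)
  have sub: "cball 0 R1 \<subseteq> disc" using R1 by auto
  have "compact (H ` cball 0 R1)"
    by (rule compact_continuous_image[OF continuous_on_subset[OF deriv_cont[OF H] sub] compact_cball])
  then obtain M0 where M0: "\<And>y. y \<in> H ` cball 0 R1 \<Longrightarrow> norm y \<le> M0"
    using compact_imp_bounded[of "H ` cball 0 R1"] unfolding bounded_iff by blast
  define M where "M = max M0 0"
  have M: "M \<ge> 0" "\<And>w. norm w \<le> R1 \<Longrightarrow> norm (H w) \<le> M"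
  proof -
    show "M \<ge> 0" by (simp add: M_def)
    fix w :: complex assume "norm w \<le> R1"
    then have "H w \<in> H ` cball 0 R1" by simp
    then have "norm (H w) \<le> M0" by (rule M0)
    then show "norm (H w) \<le> M" unfolding M_def by linarith
  qed
  have "((\<lambda>t::real. (1 - t^2) powr \<beta> * M) \<longlongrightarrow> 0 * M) (at_left 1)"
    by (intro tendsto_mult weight_to_zero[OF \<beta>] tendsto_const)
  then have "eventually (\<lambda>t::real. (1 - t^2) powr \<beta> * M < e / 2) (at_left 1)"
    using e by (intro order_tendstoD(2)) auto
  then have "eventually (\<lambda>z. (1 - (norm z)^2) powr \<beta> * M < e / 2) to_bdry"
    unfolding to_bdry_def eventually_filtercomap
    by (intro exI[of _ "\<lambda>t. (1 - t^2) powr \<beta> * M < e / 2"] conjI) auto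
  from to_bdry_ex[OF this] obtain R2 where RR2: "0 \<le> R2 \<and> R2 < 1 \<and> (\<forall>z::complex. R2 < norm z \<and> norm z < 1 \<longrightarrow>
      (1 - (norm z)^2) powr \<beta> * M < e / 2)" ..
  have R2: "0 \<le> R2" "R2 < 1" using RR2 by simp_all
  have R2b: "(1 - (norm z)^2) powr \<beta> * M < e / 2" if "R2 < norm z" "norm z < 1" for z :: complex
    using RR2 that by blast
  show "eventually (\<lambda>z. dist ((1 - (norm z)^2) powr \<beta> * norm (H z)) 0 < e) to_bdry"
  proof (rule to_bdry_eventually_I[of "max R1 R2"])
    show "max R1 R2 < 1" using R1 R2 by simp
    fix z :: complex assume zR: "max R1 R2 < norm z" and z1: "norm z < 1"
    define r where "r = norm z"
    have r: "R1 < r" "R2 < r" "r < 1" using zR z1 by (auto simp: r_def)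
    have rpos: "r > 0" using r R1 by linarith
    define t0 where "t0 = R1 / r"
    have t0: "0 \<le> t0" "t0 \<le> 1" using R1 r rpos by (auto simp: t0_def)
    have zd: "z \<in> disc" using z1 by simp
    have c: "norm (H z - H (of_real t0 * z)) \<le> \<epsilon> / \<beta> * (1 - norm z) powr (-\<beta>)"
    proof (rule comparison[OF H zd t0 \<beta>])
      show "0 \<le> \<epsilon>" using \<epsilon> by simp
      fix t :: real assume t: "t0 \<le> t" "t \<le> 1"
      have nt: "norm (of_real t * z) = t * r" using t t0 by (simp add: norm_mult r_def)
      have "R1 \<le> t * r" using t rpos by (simp add: t0_def pos_divide_le_eq)
      moreover have "t * r \<le> 1 * r" using t t0 rpos by (intro mult_right_mono) auto
      then have "t * r < 1" using r by linarith
      ultimately show "(1 - (norm (of_real t * z))^2) powr (\<beta>+1) * norm (h (of_real t * z)) \<le> \<epsilon>"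
        using Rb[of "of_real t * z"] nt R1 r by simp
    qed
    have nz0: "norm (of_real t0 * z) = R1" using t0 rpos R1 by (simp add: norm_mult norm_divide t0_def r_def)
    have Hz0: "norm (H (of_real t0 * z)) \<le> M" using M(2) nz0 by simp
    have Hz: "norm (H z) \<le> M + \<epsilon> / \<beta> * (1 - r) powr (-\<beta>)"
      using c Hz0 norm_triangle_ineq2[of "H z" "H (of_real t0 * z)"] by (simp add: r_def)
    have w0: "0 \<le> (1 - r^2) powr \<beta>" by simp
    have "(1 - r^2) powr \<beta> * norm (H z) \<le> (1 - r^2) powr \<beta> * (M + \<epsilon> / \<beta> * (1 - r) powr (-\<beta>))"
      using Hz w0 by (rule mult_left_mono)
    also have "\<dots> = (1 - r^2) powr \<beta> * M + \<epsilon> / \<beta> * ((1 - r^2) powr \<beta> * (1 - r) powr (-\<beta>))"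
      by (simp add: algebra_simps)
    also have "\<epsilon> / \<beta> * ((1 - r^2) powr \<beta> * (1 - r) powr (-\<beta>)) \<le> \<epsilon> / \<beta> * 2 powr \<beta>"
      using \<epsilon> \<beta> rpos r by (intro mult_left_mono wfact) auto
    also have "\<epsilon> / \<beta> * 2 powr \<beta> = e / 4" using \<beta> by (simp add: \<epsilon>_def field_simps)
    also have "(1 - r^2) powr \<beta> * M < e / 2" using R2b[OF _ z1] r by (simp add: r_def)
    finally have "(1 - r^2) powr \<beta> * norm (H z) < e" using e by linarith
    then show "dist ((1 - (norm z)^2) powr \<beta> * norm (H z)) 0 < e" by (simp add: r_def)
  qed
qed

lemma disc_pos: "z \<in> disc \<Longrightarrow> 0 < 1 - (norm z)^2"
  using abs_square_less_1[of "norm z"] by simp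

lemma cauchy_weighted:
  fixes H :: "complex \<Rightarrow> complex" and \<beta> :: real
  assumes H: "H holomorphic_on disc" and \<beta>: "\<beta> > 0"
    and lim: "((\<lambda>z. (1 - (norm z)^2) powr \<beta> * norm (H z)) \<longlongrightarrow> 0) to_bdry"
  shows "((\<lambda>z. (1 - (norm z)^2) powr (\<beta> + 1) * norm (deriv H z)) \<longlongrightarrow> 0) to_bdry"
  unfolding tendsto_iff
proof (intro allI impI)
  fix e :: real assume e: "e > 0"
  define \<epsilon> where "\<epsilon> = e / (2 * 4 powr (\<beta>+1))"
  have \<epsilon>: "\<epsilon> > 0" using e by (simp add: \<epsilon>_def)
  have "eventually (\<lambda>w. dist ((1 - (norm w)^2) powr \<beta> * norm (H w)) 0 < \<epsilon>) to_bdry"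
    by (rule tendstoD[OF lim \<epsilon>])
  from to_bdry_ex[OF this] obtain R where RR0: "0 \<le> R \<and> R < 1 \<and> (\<forall>w::complex. R < norm w \<and> norm w < 1 \<longrightarrow>
      dist ((1 - (norm w)^2) powr \<beta> * norm (H w)) 0 < \<epsilon>)" ..
  have R: "0 \<le> R" "R < 1" using RR0 by simp_all
  have RR: "(1 - (norm w)^2) powr \<beta> * norm (H w) < \<epsilon>" if "R < norm w" "norm w < 1" for w :: complex
  proof -
    have "dist ((1 - (norm w)^2) powr \<beta> * norm (H w)) 0 < \<epsilon>" using RR0 that by blast
    then show ?thesis by simp
  qed
  show "eventually (\<lambda>z. dist ((1 - (norm z)^2) powr (\<beta> + 1) * norm (deriv H z)) 0 < e) to_bdry"
  proof (rule to_bdry_eventually_I[of "(1 + 2 * R) / 3"])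
    show "(1 + 2 * R) / 3 < 1" using R by simp
    fix z :: complex assume zR: "(1 + 2 * R) / 3 < norm z" and z1: "norm z < 1"
    define \<rho> where "\<rho> = (1 - norm z) / 2"
    have \<rho>: "\<rho> > 0" using z1 by (simp add: \<rho>_def)
    have cb: "cball z \<rho> \<subseteq> disc"
    proof
      fix w assume "w \<in> cball z \<rho>"
      then have "norm (w - z) \<le> \<rho>" by (simp add: dist_norm norm_minus_commute)
      moreover have "norm w - norm z \<le> norm (w - z)" by (rule norm_triangle_ineq2)
      ultimately have "norm w < 1" using z1 by (simp add: \<rho>_def)
      then show "w \<in> disc" by simp
    qed
    have holb: "H holomorphic_on ball z \<rho>" using H ball_subset_cball cb by (blast intro: holomorphic_on_subset)
    have contb: "continuous_on (cball z \<rho>) H"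
      using holomorphic_on_imp_continuous_on[OF holomorphic_on_subset[OF H cb]] .
    have bnd: "norm (H w) \<le> \<epsilon> / \<rho> powr \<beta>" if w: "norm (z - w) = \<rho>" for w
    proof -
      have "norm z - norm w \<le> norm (z - w)" by (rule norm_triangle_ineq2)
      then have w1: "R < norm w" using w zR by (simp add: \<rho>_def)
      have "norm w - norm z \<le> norm (w - z)" by (rule norm_triangle_ineq2)
      then have w2: "norm w \<le> norm z + \<rho>" using w by (simp add: norm_minus_commute)
      then have w3: "norm w < 1" using z1 unfolding \<rho>_def by argo
      have "(norm w)^2 \<le> norm w" using w3 by (simp add: power2_eq_square mult_left_le_one_le)
      then have q: "\<rho> \<le> 1 - (norm w)^2" using w2 unfolding \<rho>_def by argo
      have "\<rho> powr \<beta> \<le> (1 - (norm w)^2) powr \<beta>" using q \<rho> \<beta> by (intro powr_mono2) auto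
      then have "\<rho> powr \<beta> * norm (H w) \<le> (1 - (norm w)^2) powr \<beta> * norm (H w)"
        by (rule mult_right_mono) simp
      also have "\<dots> < \<epsilon>" by (rule RR[OF w1 w3])
      finally have "\<rho> powr \<beta> * norm (H w) < \<epsilon>" .
      moreover have "\<rho> powr \<beta> > 0" using \<rho> by simp
      ultimately show ?thesis by (simp add: pos_le_divide_eq mult.commute)
    qed
    have "norm ((deriv ^^ 1) H z) \<le> fact 1 * (\<epsilon> / \<rho> powr \<beta>) / \<rho> ^ 1"
      by (rule Cauchy_inequality[OF holb contb \<rho> bnd])
    then have d1: "norm (deriv H z) \<le> \<epsilon> / \<rho> powr \<beta> / \<rho>" by simp
    have "1 - (norm z)^2 = (1 - norm z) * (1 + norm z)" by (simp add: power2_eq_square algebra_simps)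
    also have "\<dots> \<le> (1 - norm z) * 2" using z1 by (intro mult_left_mono) auto
    finally have w4: "1 - (norm z)^2 \<le> 4 * \<rho>" by (simp add: \<rho>_def)
    have w0: "0 \<le> 1 - (norm z)^2" using disc_pos[of z] z1 by simp
    have "(1 - (norm z)^2) powr (\<beta> + 1) \<le> (4 * \<rho>) powr (\<beta> + 1)"
      using w0 w4 \<beta> by (intro powr_mono2) auto
    then have "(1 - (norm z)^2) powr (\<beta> + 1) * norm (deriv H z) \<le> (4 * \<rho>) powr (\<beta> + 1) * (\<epsilon> / \<rho> powr \<beta> / \<rho>)"
      using d1 by (intro mult_mono) auto
    also have "(4 * \<rho>) powr (\<beta> + 1) = 4 powr (\<beta> + 1) * (\<rho> powr \<beta> * \<rho>)"
      using \<rho> by (simp add: powr_mult powr_add)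
    also have "4 powr (\<beta> + 1) * (\<rho> powr \<beta> * \<rho>) * (\<epsilon> / \<rho> powr \<beta> / \<rho>) = 4 powr (\<beta> + 1) * \<epsilon>"
      using \<rho> by (simp add: field_simps)
    also have "\<dots> = e / 2" by (simp add: \<epsilon>_def)
    finally have "(1 - (norm z)^2) powr (\<beta> + 1) * norm (deriv H z) < e" using e by linarith
    then show "dist ((1 - (norm z)^2) powr (\<beta> + 1) * norm (deriv H z)) 0 < e" by simp
  qed
qed

lemma part3:
  assumes B: "banach_bpe X N" and \<beta>: "\<beta> > 0" and g: "g holomorphic_on disc"
  shows "bounded_into X N (Top g) (Hv0 (std_weight \<beta>)) (Hv_norm (std_weight \<beta>)) \<longleftrightarrow>
           (\<forall>f\<in>X. ((\<lambda>z. of_real ((1 - (norm z)\<^sup>2) powr (\<beta> + 1)) * deriv g z * f z) \<longlongrightarrow> 0) to_bdry)"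
proof -
  have dg: "deriv g holomorphic_on disc" using g by (rule holomorphic_deriv) simp
  have D: "(Top g f has_field_derivative f w * deriv g w) (at w)" if f: "f \<in> X" and w: "w \<in> disc" for f w
  proof -
    have F: "(\<lambda>w. f w * deriv g w) holomorphic_on disc" using bpe_hol[OF B f] dg by (rule holomorphic_on_mult)
    show ?thesis unfolding Top_def using primitive_disc[OF F w] .
  qed
  have key: "((\<lambda>z. (1 - (norm z)^2) powr (\<beta> + 1) * norm (f z * deriv g z)) \<longlongrightarrow> 0) to_bdry \<longleftrightarrow>
      ((\<lambda>z. of_real ((1 - (norm z)\<^sup>2) powr (\<beta> + 1)) * deriv g z * f z) \<longlongrightarrow> 0) to_bdry" for f
  proof -
    have W: "((\<lambda>z. (1 - (norm z)^2) powr (\<beta> + 1) * norm (deriv g z * f z)) \<longlongrightarrow> 0) to_bdry \<longleftrightarrow>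
        ((\<lambda>z. complex_of_real ((1 - (norm z)^2) powr (\<beta> + 1)) * (deriv g z * f z)) \<longlongrightarrow> 0) to_bdry"
      by (rule weighted_tendsto_iff) simp
    have e1: "(\<lambda>z. (1 - (norm z)^2) powr (\<beta> + 1) * norm (f z * deriv g z)) =
        (\<lambda>z. (1 - (norm z)^2) powr (\<beta> + 1) * norm (deriv g z * f z))"
      by (rule ext) (simp add: norm_mult)
    have e2: "(\<lambda>z. complex_of_real ((1 - (norm z)\<^sup>2) powr (\<beta> + 1)) * (deriv g z * f z)) =
        (\<lambda>z. of_real ((1 - (norm z)\<^sup>2) powr (\<beta> + 1)) * deriv g z * f z)"
      by (rule ext) (rule mult.assoc[symmetric])
    show ?thesis unfolding e1 e2[symmetric] by (rule W)
  qed
  show ?thesis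
  proof
    assume bi: "bounded_into X N (Top g) (Hv0 (std_weight \<beta>)) (Hv_norm (std_weight \<beta>))"
    show "\<forall>f\<in>X. ((\<lambda>z. of_real ((1 - (norm z)\<^sup>2) powr (\<beta> + 1)) * deriv g z * f z) \<longlongrightarrow> 0) to_bdry"
    proof
      fix f assume f: "f \<in> X"
      have "Top g f \<in> Hv0 (std_weight \<beta>)" using bi f unfolding bounded_into_def by blast
      then have lim: "((\<lambda>z. (1 - (norm z)^2) powr \<beta> * norm (Top g f z)) \<longlongrightarrow> 0) to_bdry"
        unfolding Hv0_def std_weight_def by simp
      have "((\<lambda>z. (1 - (norm z)^2) powr (\<beta> + 1) * norm (deriv (Top g f) z)) \<longlongrightarrow> 0) to_bdry"
        by (rule cauchy_weighted[OF Top_facts(1)[OF g bpe_hol[OF B f]] \<beta> lim])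
      moreover have "eventually (\<lambda>z. (1 - (norm z)^2) powr (\<beta> + 1) * norm (deriv (Top g f) z) =
          (1 - (norm z)^2) powr (\<beta> + 1) * norm (f z * deriv g z)) to_bdry"
        using to_bdry_in_disc by eventually_elim (simp add: Top_facts(2)[OF g bpe_hol[OF B f]])
      ultimately have "((\<lambda>z. (1 - (norm z)^2) powr (\<beta> + 1) * norm (f z * deriv g z)) \<longlongrightarrow> 0) to_bdry"
        by (simp only: tendsto_cong)
      then show "((\<lambda>z. of_real ((1 - (norm z)\<^sup>2) powr (\<beta> + 1)) * deriv g z * f z) \<longlongrightarrow> 0) to_bdry"
        using key by blast
    qed
  next
    assume lim: "\<forall>f\<in>X. ((\<lambda>z. of_real ((1 - (norm z)\<^sup>2) powr (\<beta> + 1)) * deriv g z * f z) \<longlongrightarrow> 0) to_bdry"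
    have pw: "\<exists>Bd. \<forall>z\<in>disc. norm (of_real ((1 - (norm z)\<^sup>2) powr (\<beta> + 1)) * deriv g z * f z) \<le> Bd"
      if f: "f \<in> X" for f
    proof (rule bounded_on_disc)
      have "continuous_on disc f" using bpe_hol[OF B f] by (rule holomorphic_on_imp_continuous_on)
      moreover have "continuous_on disc (deriv g)" using dg by (rule holomorphic_on_imp_continuous_on)
      moreover have "continuous_on disc (\<lambda>z. (1 - (norm z)\<^sup>2) powr (\<beta> + 1))"
        by (intro continuous_intros) (auto dest: disc_pos)
      ultimately show "continuous_on disc (\<lambda>z. of_real ((1 - (norm z)\<^sup>2) powr (\<beta> + 1)) * deriv g z * f z)"
        by (intro continuous_intros) (auto simp: abs_square_eq_1)
      show "((\<lambda>z. of_real ((1 - (norm z)\<^sup>2) powr (\<beta> + 1)) * deriv g z * f z) \<longlongrightarrow> 0) to_bdry"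
        using lim f by blast
    qed
    have "\<exists>C. \<forall>z\<in>disc. \<forall>f\<in>X. norm (of_real ((1 - (norm z)\<^sup>2) powr (\<beta> + 1)) * deriv g z * f z) \<le> C * N f"
      using ubp_pt[OF B, of disc "\<lambda>z. z" "\<lambda>z. of_real ((1 - (norm z)\<^sup>2) powr (\<beta> + 1)) * deriv g z"] pw by auto
    then obtain C where C: "\<And>z f. z \<in> disc \<Longrightarrow> f \<in> X \<Longrightarrow>
        norm (of_real ((1 - (norm z)\<^sup>2) powr (\<beta> + 1)) * deriv g z * f z) \<le> C * N f"
      by blast
    have bnd: "(1 - (norm w)^2) powr (\<beta>+1) * norm (f w * deriv g w) \<le> \<bar>C\<bar> * N f"
      if f: "f \<in> X" and w: "w \<in> disc" for f w
    proof -
      have "(1 - (norm w)^2) powr (\<beta>+1) * norm (f w * deriv g w) =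
          norm (of_real ((1 - (norm w)\<^sup>2) powr (\<beta> + 1)) * deriv g w * f w)"
        by (simp add: norm_mult)
      also have "\<dots> \<le> C * N f" by (rule C[OF w f])
      also have "\<dots> \<le> \<bar>C\<bar> * N f" using bpe_nonneg[OF B f] by (intro mult_right_mono) auto
      finally show ?thesis .
    qed
    have mem: "Top g f \<in> Hv0 (std_weight \<beta>)" if f: "f \<in> X" for f
    proof -
      have l: "((\<lambda>z. (1 - (norm z)^2) powr (\<beta> + 1) * norm (f z * deriv g z)) \<longlongrightarrow> 0) to_bdry"
        using key lim f by blast
      have "((\<lambda>z. (1 - (norm z)^2) powr \<beta> * norm (Top g f z)) \<longlongrightarrow> 0) to_bdry"
        by (rule littleo[OF D[OF f] \<beta> l])
      then show ?thesis using Top_facts(1)[OF g bpe_hol[OF B f]] unfolding Hv0_def std_weight_def by simp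
    qed
    have nrm: "Hv_norm (std_weight \<beta>) (Top g f) \<le> (\<bar>C\<bar> * 2 powr \<beta> / \<beta>) * N f" if f: "f \<in> X" for f
      unfolding Hv_norm_def
    proof (rule cSUP_least)
      show "disc \<noteq> {}" by auto
      fix z :: complex assume z: "z \<in> disc"
      have "(1 - (norm z)^2) powr \<beta> * norm (Top g f z) \<le> \<bar>C\<bar> * N f * 2 powr \<beta> / \<beta>"
        by (rule growth[OF D[OF f] Top_facts(3)[OF g bpe_hol[OF B f]] \<beta> _ bnd[OF f] z])
           (auto intro: mult_nonneg_nonneg bpe_nonneg[OF B f])
      then show "std_weight \<beta> z * norm (Top g f z) \<le> (\<bar>C\<bar> * 2 powr \<beta> / \<beta>) * N f"
        unfolding std_weight_def by (simp add: field_simps)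
    qed
    show "bounded_into X N (Top g) (Hv0 (std_weight \<beta>)) (Hv_norm (std_weight \<beta>))"
      unfolding bounded_into_def using mem nrm by blast
  qed
qed

theorem corollary2p4:
  fixes v :: "complex \<Rightarrow> real" and X :: "(complex \<Rightarrow> complex) set"
    and N :: "(complex \<Rightarrow> complex) \<Rightarrow> real" and \<beta> :: real
    and u g \<phi> :: "complex \<Rightarrow> complex"
  assumes "typical_weight v" and "banach_bpe X N" and "\<beta> > 0"
    and "u holomorphic_on disc" and "g holomorphic_on disc"
    and "\<phi> holomorphic_on disc" and "\<phi> ` disc \<subseteq> disc"
  shows "(bounded_into X N (Wop u \<phi>) (Hv0 v) (Hv_norm v) \<longleftrightarrow>
           (\<forall>f\<in>X. ((\<lambda>z. of_real (v z) * u z * f (\<phi> z)) \<longlongrightarrow> 0) to_bdry))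
       \<and> (bounded_into X N (Top g) (Bv0 v) (Bv_norm v) \<longleftrightarrow>
           (\<forall>f\<in>X. ((\<lambda>z. of_real (v z) * deriv g z * f z) \<longlongrightarrow> 0) to_bdry))
       \<and> (bounded_into X N (Top g) (Hv0 (std_weight \<beta>)) (Hv_norm (std_weight \<beta>)) \<longleftrightarrow>
           (\<forall>f\<in>X. ((\<lambda>z. of_real ((1 - (norm z)\<^sup>2) powr (\<beta> + 1)) * deriv g z * f z) \<longlongrightarrow> 0) to_bdry))"
  using part1[OF assms(1,2,4,6,7)] part2[OF assms(1,2,5)] part3[OF assms(2,3,5)] by blast

end
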